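(* Let $g\in\mathbb{R}^n$ be a unit vector and $H$ a symmetric positive definite $n\times n$ matrix. Set $s=-Hg$, $g_+=\frac{s}{\|s\|}$, $y=g_+-g$, $V=I-\frac{sy^T}{s^Ty}$, $H_+=VHV^T+\frac{ss^T}{s^Ty}$. Then $$\det H_+\le\tfrac12\det H\quad\text{and}\quad \lambda_{\max}(H_+)\le\lambda_{\max}(H).$$
   Context: $\lambda_{\max}(H)$ denotes the largest eigenvalue of a symmetric matrix $H$; $\|\cdot\|$ is the Euclidean norm. *)

theory Defs
  imports "HOL-Analysis.Analysis"
begin

definition outer :: "real^'n \<Rightarrow> real^'n \<Rightarrow> real^'n^'n" where
  "outer u v = (\<chi> i j. u $ i * v $ j)"

definition eigenvalues :: "real^'n^'n \<Rightarrow> real set" where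
  "eigenvalues A = {c. \<exists>v. v \<noteq> 0 \<and> A *v v = c *\<^sub>R v}"

text \<open>Largest eigenvalue (meaningful for symmetric matrices, whose eigenvalues are all real).\<close>
definition lambda_max :: "real^'n^'n \<Rightarrow> real" where
  "lambda_max A = Max (eigenvalues A)"

definition pos_def :: "real^'n^'n \<Rightarrow> bool" where
  "pos_def A \<longleftrightarrow> (\<forall>x. x \<noteq> 0 \<longrightarrow> x \<bullet> (A *v x) > 0)"

end

theory Submission
  imports Defs
begin

lemma mv_add: "A *v (x + y) = A *v x + A *v (y::real^'n)"
  using linear_add[OF matrix_vector_mul_linear] by blast
lemma mv_diff: "A *v (x - y) = A *v x - A *v (y::real^'n)"
  using linear_diff[OF matrix_vector_mul_linear] by blast
lemma mv_neg: "A *v (- y) = - (A *v (y::real^'n))"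
  using linear_neg[OF matrix_vector_mul_linear] by blast
lemmas mv_scale = matrix_vector_mult_scaleR

lemma sym_dot:
  fixes A :: "real^'n^'n"
  assumes "transpose A = A"
  shows "x \<bullet> (A *v y) = (A *v x) \<bullet> y"
proof -
  have "x \<bullet> (A *v y) = (x v* A) \<bullet> y" by (simp add: dot_lmul_matrix)
  also have "x v* A = x v* transpose A" using assms by simp
  also have "\<dots> = A *v x" by (simp add: vector_transpose_matrix)
  finally show ?thesis .
qed

lemma psd_kernel:
  fixes B :: "real^'n^'n"
  assumes sym: "transpose B = B" and psd: "\<And>x. x \<bullet> (B *v x) \<ge> 0"
    and u: "u \<bullet> (B *v u) = 0"
  shows "B *v u = 0"
proof (rule ccontr)
  assume ne: "B *v u \<noteq> 0"
  define N where "N = (B *v u) \<bullet> (B *v u)"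
  define q where "q = (B *v u) \<bullet> (B *v (B *v u))"
  have N: "N > 0" using ne by (simp add: N_def)
  have q: "q \<ge> 0" using psd unfolding q_def by blast
  define t where "t = N / (q + 1)"
  have t: "t > 0" using N q by (simp add: t_def)
  define w where "w = u - t *\<^sub>R (B *v u)"
  have "w \<bullet> (B *v w) = u \<bullet> (B *v u) - 2 * t * N + t * t * q"
  proof -
    have e: "u \<bullet> (B *v (B *v u)) = N"
      unfolding N_def by (rule sym_dot[OF sym])
    show ?thesis unfolding w_def mv_diff mv_scale
      by (simp add: inner_diff_left inner_diff_right e N_def q_def algebra_simps inner_commute)
  qed
  also have "\<dots> = t * (t * q - 2 * N)" using u by (simp add: algebra_simps)
  also have "\<dots> < 0"
  proof -
    have "t * q < N" using N q unfolding t_def by (simp add: field_simps)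
    then show ?thesis using t N by (simp add: mult_pos_neg)
  qed
  finally show False using psd[of w] by simp
qed


lemma shift_mv: "(c *\<^sub>R mat 1 - A) *v x = c *\<^sub>R x - A *v (x::real^'n)"
  by (simp add: matrix_vector_mult_diff_rdistrib scaleR_matrix_vector_assoc[symmetric])

lemma shift_transpose: "transpose (c *\<^sub>R mat 1 - A) = c *\<^sub>R mat 1 - transpose (A::real^'n^'n)"
  by (simp add: vec_eq_iff transpose_def mat_def)

lemma eig_finite:
  fixes A :: "real^'n^'n"
  assumes sym: "transpose A = A"
  shows "finite (eigenvalues A)"
proof -
  define E where "E = eigenvalues A"
  define ev where "ev c = (SOME v. v \<noteq> 0 \<and> A *v v = c *\<^sub>R v)" for c
  have ev: "ev c \<noteq> 0 \<and> A *v ev c = c *\<^sub>R ev c" if "c \<in> E" for c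
  proof -
    from that obtain v where "v \<noteq> 0 \<and> A *v v = c *\<^sub>R v" unfolding E_def eigenvalues_def by blast
    then show ?thesis unfolding ev_def by (rule someI)
  qed
  have orth: "ev c \<bullet> ev d = 0" if "c \<in> E" "d \<in> E" "c \<noteq> d" for c d
  proof -
    have "c * (ev c \<bullet> ev d) = (A *v ev c) \<bullet> ev d" using ev[OF that(1)] by simp
    also have "\<dots> = ev c \<bullet> (A *v ev d)" using sym_dot[OF sym] by simp
    also have "\<dots> = d * (ev c \<bullet> ev d)" using ev[OF that(2)] by simp
    finally show ?thesis using that(3) by simp
  qed
  have inj: "inj_on ev E"
  proof
    fix c d assume cd: "c \<in> E" "d \<in> E" "ev c = ev d"
    show "c = d"
    proof (rule ccontr)
      assume "c \<noteq> d"
      then have "ev c \<bullet> ev c = 0" using orth[OF cd(1,2)] cd(3) by simp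
      then show False using ev[OF cd(1)] by simp
    qed
  qed
  have "pairwise orthogonal (ev ` E)"
    unfolding pairwise_def orthogonal_def using orth by auto
  moreover have "0 \<notin> ev ` E" using ev by auto
  ultimately have "independent (ev ` E)" by (rule pairwise_orthogonal_independent)
  then have "finite (ev ` E)" by (rule independent_imp_finite)
  then show ?thesis using inj finite_imageD unfolding E_def by blast
qed

lemma eig_max:
  fixes A :: "real^'n^'n"
  assumes sym: "transpose A = A"
  shows "lambda_max A \<in> eigenvalues A \<and> (\<forall>x. x \<bullet> (A *v x) \<le> lambda_max A * (x \<bullet> x))"
proof -
  let ?f = "\<lambda>x. x \<bullet> (A *v x)"
  have ne: "sphere (0::real^'n) 1 \<noteq> {}"
  proof -
    have "axis undefined 1 \<in> sphere (0::real^'n) 1" by simp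
    then show ?thesis by blast
  qed
  have cont: "continuous_on (sphere 0 1) ?f"
    by (intro continuous_on_inner continuous_on_id matrix_vector_mult_linear_continuous_on)
  obtain u where u: "u \<in> sphere 0 1" and umax: "\<forall>x \<in> sphere 0 1. ?f x \<le> ?f u"
    using continuous_attains_sup[OF compact_sphere ne cont] by blast
  define m where "m = ?f u"
  have ray: "?f x \<le> m * (x \<bullet> x)" for x
  proof (cases "x = 0")
    case True then show ?thesis by simp
  next
    case False
    define z where "z = (1 / norm x) *\<^sub>R x"
    have "z \<in> sphere 0 1" using False by (simp add: z_def)
    then have fz: "?f z \<le> m" using umax m_def by blast
    have n: "norm x > 0" using False by simp
    have fze: "?f z = (1 / norm x) * (1 / norm x) * ?f x"
      unfolding z_def mv_scale by simp
    have xx: "x \<bullet> x = norm x * norm x" by (simp add: power2_norm_eq_inner[symmetric] power2_eq_square)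
    have "?f x = (norm x * norm x) * ?f z" using n unfolding fze by (simp add: field_simps)
    also have "\<dots> \<le> (norm x * norm x) * m" using fz n by (intro mult_left_mono) auto
    finally show ?thesis unfolding xx by (simp add: mult.commute)
  qed
  define B where "B = m *\<^sub>R mat 1 - A"
  have Bsym: "transpose B = B" using sym by (simp add: B_def shift_transpose)
  have Bpsd: "x \<bullet> (B *v x) \<ge> 0" for x
    using ray[of x] by (simp add: B_def shift_mv inner_diff_right)
  have uu: "u \<bullet> u = 1" using u by (simp add: inner_commute norm_eq_1)
  have "u \<bullet> (B *v u) = 0" by (simp add: B_def shift_mv inner_diff_right uu m_def)
  then have "B *v u = 0" by (rule psd_kernel[OF Bsym Bpsd])
  then have Au: "A *v u = m *\<^sub>R u" by (simp add: B_def shift_mv)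
  have "u \<noteq> 0" using u by auto
  then have mE: "m \<in> eigenvalues A" unfolding eigenvalues_def using Au by blast
  have le: "c \<le> m" if "c \<in> eigenvalues A" for c
  proof -
    from that obtain v where vv: "v \<noteq> 0 \<and> A *v v = c *\<^sub>R v" unfolding eigenvalues_def by blast
    then have v: "v \<noteq> 0" "A *v v = c *\<^sub>R v" by auto
    have e: "v \<bullet> (A *v v) = c * (v \<bullet> v)" unfolding v(2) by simp
    have "c * (v \<bullet> v) \<le> m * (v \<bullet> v)" using ray[of v] unfolding e .
    moreover have "v \<bullet> v > 0" using v(1) by simp
    ultimately show ?thesis by (rule mult_right_le_imp_le)
  qed
  have lm: "lambda_max A = m" unfolding lambda_max_def
    by (rule Max_eqI[OF eig_finite[OF sym] le mE])
  show ?thesis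
  proof (intro conjI allI)
    show "lambda_max A \<in> eigenvalues A" using mE unfolding lm .
    fix x show "x \<bullet> (A *v x) \<le> lambda_max A * (x \<bullet> x)" unfolding lm by (rule ray)
  qed
qed


lemma mat1_axis: "(\<chi> i. axis i 1) = (mat 1 :: real^'n^'n)"
  by (simp add: vec_eq_iff axis_def mat_def)

lemma det_row_replace:
  fixes v :: "real^'n"
  shows "det (\<chi> i. if i = k then v else axis i 1) = v $ k"
proof -
  define A0 :: "real^'n^'n" where "A0 = (\<chi> i. if i = k then v $ k *s axis k 1 else axis i 1)"
  define x where "x = (\<Sum>j\<in>UNIV - {k}. v $ j *s axis j (1::real))"
  have vx: "v = v $ k *s axis k 1 + x"
  proof -
    have "v = (\<Sum>j\<in>UNIV. v $ j *s axis j (1::real))" by (simp add: basis_expansion)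
    also have "\<dots> = v $ k *s axis k 1 + x" unfolding x_def
      by (simp add: sum.remove[of UNIV k])
    finally show ?thesis .
  qed
  have rowA: "row i A0 = (if i = k then v $ k *s axis k 1 else axis i 1)" for i
    by (simp add: A0_def row_def)
  have xs: "x \<in> vec.span {row j A0 | j. j \<noteq> k}"
    unfolding x_def
  proof (intro vec.span_sum vec.span_scale vec.span_base)
    fix j assume "j \<in> UNIV - {k}"
    then have jk: "j \<noteq> k" by simp
    then have "axis j 1 = row j A0" using rowA[of j] by simp
    then show "axis j 1 \<in> {row j A0 | j. j \<noteq> k}" using jk by blast
  qed
  have "det (\<chi> i. if i = k then v else axis i 1) = det (\<chi> i. if i = k then row k A0 + x else row i A0)"
    by (rule arg_cong[where f=det], rule Cart_lambda_cong) (simp add: rowA vx[symmetric])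
  also have "\<dots> = det A0" by (rule det_row_span[OF xs])
  also have "\<dots> = v $ k * det (\<chi> i. if i = k then axis k 1 else axis i (1::real))"
    unfolding A0_def by (rule det_row_mul)
  also have "(\<chi> i. if i = k then axis k 1 else axis i (1::real)) = (mat 1 :: real^'n^'n)"
    by (simp add: vec_eq_iff axis_def mat_def)
  finally show ?thesis by simp
qed

lemma det_L1:
  fixes u v :: "real^'n"
  assumes "finite T" "k \<notin> T"
  shows "det (\<chi> i. if i = k then v else if i \<in> T then axis i 1 + u $ i *s v else axis i 1) = v $ k"
  using assms
proof (induction T rule: finite_induct)
  case empty
  have "(\<chi> i. if i = k then v else if i \<in> {} then axis i 1 + u $ i *s v else axis i 1) = (\<chi> i. if i = k then v else axis i (1::real))"
    by (rule Cart_lambda_cong) simp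
  then show ?case using det_row_replace[of k v] by simp
next
  case (insert j T)
  have jk: "j \<noteq> k" using insert by auto
  define C where "C i = (if i = k then v else if i \<in> T then axis i 1 + u $ i *s v else axis i (1::real))" for i
  have "det (\<chi> i. if i = k then v else if i \<in> insert j T then axis i 1 + u $ i *s v else axis i 1)
      = det (\<chi> i. if i = j then axis j 1 + u $ j *s v else C i)"
    by (rule arg_cong[where f=det], rule Cart_lambda_cong) (use jk in \<open>auto simp: C_def\<close>)
  also have "\<dots> = det (\<chi> i. if i = j then axis j 1 else C i) + det (\<chi> i. if i = j then u $ j *s v else C i)"
    by (rule det_row_add)
  also have "det (\<chi> i. if i = j then axis j 1 else C i) =
      det (\<chi> i. if i = k then v else if i \<in> T then axis i 1 + u $ i *s v else axis i (1::real))"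
    by (rule arg_cong[where f=det], rule Cart_lambda_cong) (use insert jk in \<open>auto simp: C_def\<close>)
  also have "\<dots> = v $ k" using insert by simp
  also have "det (\<chi> i. if i = j then u $ j *s v else C i) = u $ j * det (\<chi> i. if i = j then v else C i)"
    by (rule det_row_mul)
  also have "det (\<chi> i. if i = j then v else C i) = 0"
    by (rule det_identical_rows[OF jk]) (simp add: row_def C_def jk vec_eq_iff)
  finally show ?case by simp
qed

lemma det_L2:
  fixes u v :: "real^'n"
  assumes "finite T"
  shows "det (\<chi> i. if i \<in> T then axis i 1 + u $ i *s v else axis i 1) = 1 + (\<Sum>i\<in>T. u $ i * v $ i)"
  using assms
proof (induction T rule: finite_induct)
  case empty
  then show ?case by (simp add: mat1_axis)
next
  case (insert k T)
  define D where "D i = (if i \<in> T then axis i 1 + u $ i *s v else axis i (1::real))" for i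
  have "det (\<chi> i. if i \<in> insert k T then axis i 1 + u $ i *s v else axis i 1)
      = det (\<chi> i. if i = k then axis k 1 + u $ k *s v else D i)"
    by (rule arg_cong[where f=det], rule Cart_lambda_cong) (auto simp: D_def)
  also have "\<dots> = det (\<chi> i. if i = k then axis k 1 else D i) + det (\<chi> i. if i = k then u $ k *s v else D i)"
    by (rule det_row_add)
  also have "det (\<chi> i. if i = k then axis k 1 else D i) =
      det (\<chi> i. if i \<in> T then axis i 1 + u $ i *s v else axis i (1::real))"
    by (rule arg_cong[where f=det], rule Cart_lambda_cong) (use insert in \<open>auto simp: D_def\<close>)
  also have "\<dots> = 1 + (\<Sum>i\<in>T. u $ i * v $ i)" by (rule insert.IH)
  also have "det (\<chi> i. if i = k then u $ k *s v else D i) = u $ k * det (\<chi> i. if i = k then v else D i)"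
    by (rule det_row_mul)
  also have "det (\<chi> i. if i = k then v else D i) = v $ k"
    unfolding D_def by (rule det_L1) (use insert in auto)
  finally show ?case using insert by (simp add: algebra_simps)
qed

lemma det_rank_one:
  fixes u v :: "real^'n"
  shows "det (mat 1 + outer u v) = 1 + u \<bullet> v"
proof -
  have "mat 1 + outer u v = (\<chi> i. if i \<in> UNIV then axis i 1 + u $ i *s v else axis i (1::real))"
    by (simp add: vec_eq_iff outer_def mat_def axis_def)
  then show ?thesis using det_L2[of UNIV u v] by (simp add: inner_vec_def)
qed


lemma det_zero_kernel:
  fixes A :: "real^'n^'n"
  assumes "det A = 0"
  shows "\<exists>x. x \<noteq> 0 \<and> A *v x = 0"
proof -
  have h: "(det A \<noteq> 0) = inj ((*v) A)"
    using det_nz_iff_inj[OF matrix_vector_mul_linear, of A] by (simp only: matrix_of_matrix_vector_mul)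
  have "\<not> inj ((*v) A)" using h assms by simp
  then show ?thesis using linear_injective_0[OF matrix_vector_mul_linear] by auto
qed

lemma posdef_det_pos:
  fixes H :: "real^'n^'n"
  assumes pd: "pos_def H"
  shows "det H > 0"
proof -
  define M where "M t = t *\<^sub>R mat 1 + (1 - t) *\<^sub>R H" for t :: real
  have Mv: "M t *v x = t *\<^sub>R x + (1 - t) *\<^sub>R (H *v x)" for t x
    by (simp add: M_def matrix_vector_mult_add_rdistrib scaleR_matrix_vector_assoc[symmetric])
  have nz: "det (M t) \<noteq> 0" if t: "0 \<le> t" "t \<le> 1" for t
  proof
    assume "det (M t) = 0"
    then obtain x where x: "x \<noteq> 0" "M t *v x = 0" using det_zero_kernel by blast
    have "0 = x \<bullet> (M t *v x)" using x by simp
    also have "\<dots> = t * (x \<bullet> x) + (1 - t) * (x \<bullet> (H *v x))" by (simp add: Mv inner_add_right)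
    also have "\<dots> > 0"
    proof -
      have a: "x \<bullet> x > 0" using x by simp
      have b: "x \<bullet> (H *v x) > 0" using pd x unfolding pos_def_def by blast
      show ?thesis
      proof (cases "t = 0")
        case True then show ?thesis using b by simp
      next
        case False
        then have "t * (x \<bullet> x) > 0" using a t by simp
        moreover have "(1 - t) * (x \<bullet> (H *v x)) \<ge> 0" using b t by simp
        ultimately show ?thesis by linarith
      qed
    qed
    finally show False by simp
  qed
  have dM: "det (M t) = (\<Sum>p\<in>{p. p permutes UNIV}. of_int (sign p) *
      (\<Prod>i\<in>UNIV. t * (mat 1 :: real^'n^'n) $ i $ p i + (1 - t) * H $ i $ p i))" for t
    by (simp add: det_def M_def)
  have cont: "isCont (\<lambda>t. det (M t)) t" for t
    unfolding dM by (intro continuous_intros)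
  show ?thesis
  proof (rule ccontr)
    assume "\<not> det H > 0"
    then have "det (M 0) \<le> 0" by (simp add: M_def)
    moreover have "0 \<le> det (M 1)" by (simp add: M_def)
    ultimately obtain t where "0 \<le> t" "t \<le> 1" "det (M t) = 0"
      using IVT[of "\<lambda>t. det (M t)" 0 0 1] cont by auto
    then show False using nz by blast
  qed
qed


lemma outer_mv: "outer u v *v x = (v \<bullet> x) *\<^sub>R (u::real^'n)"
  by (simp add: vec_eq_iff outer_def matrix_vector_mult_def inner_vec_def sum_distrib_left mult_ac)

lemma transpose_outer: "transpose (outer u v) = outer v (u::real^'n)"
  by (simp add: vec_eq_iff transpose_def outer_def)

lemma transpose_I_plus: "transpose (mat 1 + c *\<^sub>R outer u v) = mat 1 + c *\<^sub>R outer v (u::real^'n)"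
  by (simp add: vec_eq_iff transpose_def outer_def mat_def)

lemma transpose_I_minus: "transpose (mat 1 - c *\<^sub>R outer u v) = mat 1 - c *\<^sub>R outer v (u::real^'n)"
  by (simp add: vec_eq_iff transpose_def outer_def mat_def)

lemma transpose_add_scale: "transpose (A + c *\<^sub>R B) = transpose A + c *\<^sub>R transpose (B::real^'n^'n)"
  by (simp add: vec_eq_iff transpose_def)

lemma dot_transpose: "x \<bullet> (A *v y) = (transpose A *v x) \<bullet> (y::real^'n)"
proof -
  have "x \<bullet> (A *v y) = (x v* A) \<bullet> y" by (simp add: dot_lmul_matrix)
  also have "x v* A = x v* transpose (transpose A)" by simp
  also have "\<dots> = transpose A *v x" by (rule vector_transpose_matrix)
  finally show ?thesis .
qed

lemma pd_cs:
  fixes H :: "real^'n^'n"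
  assumes sym: "transpose H = H" and pd: "pos_def H"
  shows "(p \<bullet> (H *v q))^2 \<le> (p \<bullet> (H *v p)) * (q \<bullet> (H *v q))"
proof (cases "q = 0")
  case True then show ?thesis by simp
next
  case False
  define Q where "Q = q \<bullet> (H *v q)"
  define P where "P = p \<bullet> (H *v p)"
  define b where "b = p \<bullet> (H *v q)"
  have Q: "Q > 0" using pd False unfolding pos_def_def Q_def by blast
  define t where "t = b / Q"
  define w where "w = p - t *\<^sub>R q"
  have qp: "q \<bullet> (H *v p) = b" unfolding b_def using sym_dot[OF sym, of q p] by (simp add: inner_commute)
  have pw: "w \<bullet> (H *v w) \<ge> 0"
    using pd unfolding pos_def_def by (cases "w = 0") (auto intro: less_imp_le)
  have "w \<bullet> (H *v w) = P - 2 * t * b + t * t * Q"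
    unfolding w_def mv_diff mv_scale
    by (simp add: inner_diff_left inner_diff_right qp P_def Q_def b_def[symmetric] algebra_simps)
  also have "\<dots> = P - b^2 / Q" using Q unfolding t_def by (simp add: field_simps power2_eq_square)
  finally have "b^2 / Q \<le> P" using pw by simp
  then have "b^2 \<le> P * Q" using Q by (simp add: field_simps)
  then show ?thesis unfolding b_def P_def Q_def .
qed


declare transpose_matrix_vector [simp del]

theorem mainTheorem7:
  fixes g :: "real^'n" and H :: "real^'n^'n"
  assumes "norm g = 1"
    and "transpose H = H"
    and "pos_def H"
  defines "s \<equiv> - (H *v g)"
  defines "gp \<equiv> (1 / norm s) *\<^sub>R s"
  defines "y \<equiv> gp - g"
  defines "V \<equiv> mat 1 - (1 / (s \<bullet> y)) *\<^sub>R outer s y"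
  defines "Hp \<equiv> V ** H ** transpose V + (1 / (s \<bullet> y)) *\<^sub>R outer s s"
  shows "det Hp \<le> det H / 2 \<and> lambda_max Hp \<le> lambda_max H"
proof -
  have sym: "transpose H = H" by fact
  have pd: "pos_def H" by fact
  have gg: "g \<bullet> g = 1" using assms(1) by (simp add: norm_eq_1)
  have g0: "g \<noteq> 0" using assms(1) by auto
  define a where "a = g \<bullet> (H *v g)"
  have a: "a > 0" using pd g0 unfolding pos_def_def a_def by blast
  have Hg: "H *v g = - s" by (simp add: s_def)
  have sg: "s \<bullet> g = - a" unfolding a_def s_def by (simp add: inner_commute)
  have gs: "g \<bullet> s = - a" using sg by (simp add: inner_commute)
  have s0: "s \<noteq> 0" using sg a by auto
  define \<sigma> where "\<sigma> = norm s"
  have \<sigma>: "\<sigma> > 0" using s0 by (simp add: \<sigma>_def)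
  have ss: "s \<bullet> s = \<sigma> * \<sigma>" by (simp add: \<sigma>_def power2_norm_eq_inner[symmetric] power2_eq_square)
  have sgp: "s \<bullet> gp = \<sigma>" using \<sigma> by (simp add: gp_def \<sigma>_def[symmetric] ss)
  define \<rho> where "\<rho> = s \<bullet> y"
  have \<rho>e: "\<rho> = \<sigma> + a" by (simp add: \<rho>_def y_def inner_diff_right sgp sg)
  have \<rho>: "\<rho> > 0" using \<sigma> a \<rho>e by simp
  have gpgp: "gp \<bullet> gp = 1" using \<sigma> by (simp add: gp_def \<sigma>_def[symmetric] ss)
  have gpg: "gp \<bullet> g = - a / \<sigma>" by (simp add: gp_def \<sigma>_def[symmetric] sg)
  have yy: "y \<bullet> y = 2 * \<rho> / \<sigma>"
    using \<sigma> by (simp add: y_def inner_diff_left inner_diff_right gpgp gpg gg inner_commute[of g gp] \<rho>e field_simps)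
  have a_le: "a \<le> \<sigma>"
  proof -
    have "- (s \<bullet> g) \<le> norm s * norm g" using norm_cauchy_schwarz[of "-s" g] by simp
    then show ?thesis using sg assms(1) by (simp add: \<sigma>_def)
  qed
  define L where "L = lambda_max H"
  have ray: "x \<bullet> (H *v x) \<le> L * (x \<bullet> x)" for x using eig_max[OF sym] unfolding L_def by blast
  have \<sigma>L: "\<sigma> \<le> L"
  proof -
    have "(g \<bullet> (H *v (H *v g)))^2 \<le> (g \<bullet> (H *v g)) * ((H *v g) \<bullet> (H *v (H *v g)))"
      by (rule pd_cs[OF sym pd])
    moreover have "g \<bullet> (H *v (H *v g)) = \<sigma> * \<sigma>"
      using sym_dot[OF sym, of g "H *v g"] by (simp add: Hg ss)
    moreover have "(H *v g) \<bullet> (H *v (H *v g)) \<le> L * (\<sigma> * \<sigma>)"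
      using ray[of "H *v g"] by (simp add: Hg ss)
    ultimately have "(\<sigma> * \<sigma>)^2 \<le> a * (L * (\<sigma> * \<sigma>))"
      unfolding a_def[symmetric] using a by (smt (verit) mult_left_mono)
    then have "\<sigma> * \<sigma> \<le> a * L" using \<sigma> by (simp add: power2_eq_square)
    also have "\<dots> \<le> \<sigma> * L"
    proof -
      have "L \<ge> 0"
      proof (rule ccontr)
        assume "\<not> L \<ge> 0"
        then have "a * L < 0" using a by (simp add: mult_pos_neg)
        moreover have "\<sigma> * \<sigma> > 0" using \<sigma> by simp
        ultimately show False using \<open>\<sigma> * \<sigma> \<le> a * L\<close> by linarith
      qed
      then show ?thesis using a_le by (simp add: mult_right_mono)
    qed
    finally show ?thesis using \<sigma> by simp
  qed
  have VT: "transpose V = mat 1 - (1 / \<rho>) *\<^sub>R outer y s"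
    unfolding V_def \<rho>_def by (rule transpose_I_minus)
  have VTx: "transpose V *v x = x - ((s \<bullet> x) / \<rho>) *\<^sub>R y" for x
    by (simp add: VT matrix_vector_mult_diff_rdistrib scaleR_matrix_vector_assoc[symmetric] outer_mv)
  have Vx: "V *v x = x - ((y \<bullet> x) / \<rho>) *\<^sub>R s" for x
    by (simp add: V_def \<rho>_def[symmetric] matrix_vector_mult_diff_rdistrib scaleR_matrix_vector_assoc[symmetric] outer_mv)
  have Hpx: "Hp *v x = V *v (H *v (transpose V *v x)) + ((s \<bullet> x) / \<rho>) *\<^sub>R s" for x
  proof -
    have "(V ** H ** transpose V) *v x = V *v (H *v (transpose V *v x))"
      by (simp only: matrix_vector_mul_assoc matrix_mul_assoc)
    then show ?thesis
      by (simp add: Hp_def \<rho>_def[symmetric] matrix_vector_mult_add_rdistrib scaleR_matrix_vector_assoc[symmetric]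
        outer_mv)
  qed
  have sVT: "s \<bullet> (transpose V *v x) = 0" for x
    using \<rho> by (simp add: VTx inner_diff_right \<rho>_def[symmetric])
  have quad: "x \<bullet> (Hp *v x) \<le> L * (x \<bullet> x)" for x
  proof -
    define c where "c = (s \<bullet> x) / \<rho>"
    define z where "z = transpose V *v x"
    have z: "z = x - c *\<^sub>R y" by (simp add: z_def VTx c_def)
    have zs: "z \<bullet> s = 0" using sVT[of x] by (simp add: z_def inner_commute)
    have zgp: "z \<bullet> gp = 0" by (simp add: gp_def zs)
    have zHg: "z \<bullet> (H *v g) = 0" by (simp add: Hg zs)
    have gHz: "g \<bullet> (H *v z) = 0" using sym_dot[OF sym, of g z] zHg by (simp add: inner_commute)
    have xz: "x = z + c *\<^sub>R y" by (simp add: z)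
    have e1: "x \<bullet> (Hp *v x) = z \<bullet> (H *v z) + c * c * \<rho>"
    proof -
      have "x \<bullet> (Hp *v x) = x \<bullet> (V *v (H *v z)) + c * (s \<bullet> x)"
        by (simp add: Hpx z_def inner_add_right c_def inner_commute)
      also have "x \<bullet> (V *v (H *v z)) = z \<bullet> (H *v z)"
        by (simp add: dot_transpose z_def)
      also have "s \<bullet> x = c * \<rho>" using \<rho> by (simp add: c_def)
      finally show ?thesis by simp
    qed
    have e2: "x \<bullet> x = z \<bullet> z - 2 * c * (z \<bullet> g) + c * c * (2 * \<rho> / \<sigma>)"
    proof -
      have zy: "z \<bullet> y = - (z \<bullet> g)" by (simp add: y_def inner_diff_right zgp)
      show ?thesis unfolding xz
        by (simp add: inner_add_left inner_add_right zy yy inner_commute[of y z] algebra_simps)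
    qed
    define w where "w = z - c *\<^sub>R g"
    have e3: "w \<bullet> (H *v w) = z \<bullet> (H *v z) + c * c * a"
      by (simp add: w_def mv_diff mv_scale inner_diff_left inner_diff_right gHz zHg
          a_def[symmetric] inner_commute[of "H *v g" z] algebra_simps)
    have e4: "w \<bullet> w = z \<bullet> z - 2 * c * (z \<bullet> g) + c * c"
      by (simp add: w_def inner_diff_left inner_diff_right gg inner_commute[of g z] algebra_simps)
    have r: "z \<bullet> (H *v z) + c * c * a \<le> L * (z \<bullet> z - 2 * c * (z \<bullet> g) + c * c)"
      using ray[of w] unfolding e3 e4 .
    have k: "L + \<sigma> \<le> L * (2 * \<rho> / \<sigma>)"
    proof -
      have "L * (2 * \<rho> / \<sigma>) = 2 * L + 2 * L * a / \<sigma>" using \<sigma> by (simp add: \<rho>e field_simps)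
      moreover have "2 * L * a / \<sigma> \<ge> 0" using \<sigma>L \<sigma> a by simp
      ultimately show ?thesis using \<sigma>L by linarith
    qed
    have "c * c * (L + \<sigma>) \<le> c * c * (L * (2 * \<rho> / \<sigma>))"
      using k by (intro mult_left_mono) auto
    then show ?thesis unfolding e1 e2 using r \<rho>e by (simp add: algebra_simps)
  qed
  have Hpsym: "transpose Hp = Hp"
    by (simp add: Hp_def transpose_add_scale transpose_outer matrix_transpose_mul sym matrix_mul_assoc)
  have lam: "lambda_max Hp \<le> L"
  proof -
    have "lambda_max Hp \<in> eigenvalues Hp" using eig_max[OF Hpsym] by blast
    then obtain v where vv: "v \<noteq> 0 \<and> Hp *v v = lambda_max Hp *\<^sub>R v" unfolding eigenvalues_def by blast
    then have v: "v \<noteq> 0" "Hp *v v = lambda_max Hp *\<^sub>R v" by auto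
    have e: "v \<bullet> (Hp *v v) = lambda_max Hp * (v \<bullet> v)" unfolding v(2) by simp
    have "lambda_max Hp * (v \<bullet> v) \<le> L * (v \<bullet> v)" using quad[of v] unfolding e .
    moreover have "v \<bullet> v > 0" using v(1) by simp
    ultimately show ?thesis by (rule mult_right_le_imp_le)
  qed
  define \<alpha> where "\<alpha> = 1 / sqrt (a * \<rho>)"
  have \<alpha>2: "\<alpha> * \<alpha> * a = 1 / \<rho>"
    using a \<rho> by (simp add: \<alpha>_def field_simps)
  define wv where "wv = \<alpha> *\<^sub>R g - (1 / \<rho>) *\<^sub>R y"
  define M where "M = mat 1 + outer s wv"
  have Meq: "M = V + \<alpha> *\<^sub>R outer s g"
    by (simp add: M_def V_def \<rho>_def[symmetric] wv_def vec_eq_iff outer_def mat_def algebra_simps)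
  have Mx: "M *v x = V *v x + (\<alpha> * (g \<bullet> x)) *\<^sub>R s" for x
    by (simp add: Meq matrix_vector_mult_add_rdistrib scaleR_matrix_vector_assoc[symmetric] outer_mv)
  have MT: "transpose M = transpose V + \<alpha> *\<^sub>R outer g s"
    by (simp add: Meq transpose_add_scale transpose_outer)
  have MTx: "transpose M *v x = transpose V *v x + (\<alpha> * (s \<bullet> x)) *\<^sub>R g" for x
    by (simp add: MT matrix_vector_mult_add_rdistrib scaleR_matrix_vector_assoc[symmetric] outer_mv)
  have Vs: "V *v s = 0" using \<rho> by (simp add: Vx \<rho>_def[symmetric] inner_commute[of y s])
  have fact: "Hp = M ** H ** transpose M"
  proof (subst matrix_eq, intro allI)
    fix x
    define z where "z = transpose V *v x"
    have gHz: "g \<bullet> (H *v z) = 0"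
      using sym_dot[OF sym, of g z] sVT[of x] by (simp add: Hg z_def inner_commute)
    have "(M ** H ** transpose M) *v x = M *v (H *v (transpose M *v x))"
      by (simp only: matrix_vector_mul_assoc matrix_mul_assoc)
    also have "\<dots> = V *v (H *v z) + (\<alpha> * \<alpha> * a * (s \<bullet> x)) *\<^sub>R s"
      by (simp add: MTx z_def[symmetric] mv_add mv_scale Mx gHz Hg mv_neg Vs
          inner_add_right a_def[symmetric] sg gs algebra_simps)
    also have "\<dots> = Hp *v x" unfolding Hpx \<alpha>2 z_def by simp
    finally show "Hp *v x = (M ** H ** transpose M) *v x" by simp
  qed
  have detM: "det M = - \<alpha> * a"
    using \<rho> by (simp add: M_def det_rank_one wv_def inner_diff_right sg \<rho>_def[symmetric])
  have dHp: "det Hp = (a / \<rho>) * det H"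
  proof -
    have "det Hp = det M * det H * det M" by (simp add: fact det_mul det_transpose)
    also have "\<dots> = (\<alpha> * \<alpha> * a) * a * det H" by (simp add: detM algebra_simps)
    finally show ?thesis using \<alpha>2 by simp
  qed
  have dH: "det H > 0" by (rule posdef_det_pos[OF pd])
  have "a / \<rho> \<le> 1 / 2" using \<rho> a_le \<rho>e by (simp add: field_simps)
  then have "a / \<rho> * det H \<le> 1 / 2 * det H" using dH by (intro mult_right_mono) auto
  then have "det Hp \<le> det H / 2" unfolding dHp by simp
  then show ?thesis using lam unfolding L_def by simp
qed

end
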